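(* Let $W$ be a $\mathbb Z/2$-graded vector space, $\nu\in\mathbb Z/2$, and $\{-,-\}:W\otimes W\to W$ a bilinear operation of degree $\nu$ satisfying $\{u,v\}=-(-1)^{(|u|+\nu)(|v|+\nu)}\{v,u\}$. Suppose there is a trilinear operation $\alpha(u|v,w)$ of degree $0$ satisfying $\alpha(u|v,w)=(-1)^{(|v|+\nu)(|w|+\nu)}\alpha(u|w,v)$, such that for all homogeneous $u,v,w$, $$\{\{u,v\},w\}=\alpha(u|v,w)-(-1)^{(|u|+\nu)(|v|+\nu)}\alpha(v|u,w).$$ Then $\{-,-\}$ is a graded Lie bracket, i.e. $\{u,\{v,w\}\}-(-1)^{(|u|+\nu)(|v|+\nu)}\{v,\{u,w\}\}=\{\{u,v\},w\}$ for all homogeneous $u,v,w$.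
   Context: $|u|\in\mathbb Z/2$ denotes the parity of a homogeneous element; an operation of degree $\nu$ shifts parity by $\nu$. *)

theory Defs
  imports Complex_Main
begin

text \<open>Parities in Z/2 are represented by bool: False = 0, True = 1;
  addition is exclusive or (a \<noteq> b), multiplication is conjunction.\<close>

definition psign :: "bool \<Rightarrow> 'w::group_add \<Rightarrow> 'w" where
  "psign e x = (if e then - x else x)"

text \<open>A Z/2-graded vector space over the field 'k: W d is the subspace of
  homogeneous elements of parity d, and the ambient space is W False (+) W True.\<close>

definition graded_vs :: "('k::field \<Rightarrow> 'w::ab_group_add \<Rightarrow> 'w) \<Rightarrow> (bool \<Rightarrow> 'w set) \<Rightarrow> bool" where
  "graded_vs scale W \<longleftrightarrow> vector_space scale
     \<and> (\<forall>d. module.subspace scale (W d))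
     \<and> W False \<inter> W True = {0}
     \<and> (\<forall>x. \<exists>a b. a \<in> W False \<and> b \<in> W True \<and> x = a + b)"

definition bilinear_op :: "('k::field \<Rightarrow> 'w::ab_group_add \<Rightarrow> 'w) \<Rightarrow> ('w \<Rightarrow> 'w \<Rightarrow> 'w) \<Rightarrow> bool" where
  "bilinear_op scale f \<longleftrightarrow> (\<forall>u. Vector_Spaces.linear scale scale (\<lambda>v. f u v))
     \<and> (\<forall>v. Vector_Spaces.linear scale scale (\<lambda>u. f u v))"

definition trilinear_op :: "('k::field \<Rightarrow> 'w::ab_group_add \<Rightarrow> 'w) \<Rightarrow> ('w \<Rightarrow> 'w \<Rightarrow> 'w \<Rightarrow> 'w) \<Rightarrow> bool" where
  "trilinear_op scale f \<longleftrightarrow> (\<forall>v w. Vector_Spaces.linear scale scale (\<lambda>u. f u v w))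
     \<and> (\<forall>u w. Vector_Spaces.linear scale scale (\<lambda>v. f u v w))
     \<and> (\<forall>u v. Vector_Spaces.linear scale scale (\<lambda>w. f u v w))"

end

theory Submission
  imports Defs
begin

theorem mainTheorem8:
  fixes scale :: "'k::field \<Rightarrow> 'w::ab_group_add \<Rightarrow> 'w"
    and W :: "bool \<Rightarrow> 'w set"
    and nu :: bool
    and br :: "'w \<Rightarrow> 'w \<Rightarrow> 'w"
    and alpha :: "'w \<Rightarrow> 'w \<Rightarrow> 'w \<Rightarrow> 'w"
  assumes graded: "graded_vs scale W"
    and br_bilinear: "bilinear_op scale br"
    and br_degree: "\<And>a b u v. u \<in> W a \<Longrightarrow> v \<in> W b \<Longrightarrow> br u v \<in> W ((a \<noteq> b) \<noteq> nu)"
    and br_skew: "\<And>a b u v. u \<in> W a \<Longrightarrow> v \<in> W b \<Longrightarrow>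
                     br u v = - psign ((a \<noteq> nu) \<and> (b \<noteq> nu)) (br v u)"
    and alpha_trilinear: "trilinear_op scale alpha"
    and alpha_degree: "\<And>a b c u v w. u \<in> W a \<Longrightarrow> v \<in> W b \<Longrightarrow> w \<in> W c \<Longrightarrow>
                     alpha u v w \<in> W ((a \<noteq> b) \<noteq> c)"
    and alpha_sym: "\<And>a b c u v w. u \<in> W a \<Longrightarrow> v \<in> W b \<Longrightarrow> w \<in> W c \<Longrightarrow>
                     alpha u v w = psign ((b \<noteq> nu) \<and> (c \<noteq> nu)) (alpha u w v)"
    and jac: "\<And>a b c u v w. u \<in> W a \<Longrightarrow> v \<in> W b \<Longrightarrow> w \<in> W c \<Longrightarrow>
                     br (br u v) w = alpha u v w - psign ((a \<noteq> nu) \<and> (b \<noteq> nu)) (alpha v u w)"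
  shows "\<And>a b c u v w. u \<in> W a \<Longrightarrow> v \<in> W b \<Longrightarrow> w \<in> W c \<Longrightarrow>
           br u (br v w) - psign ((a \<noteq> nu) \<and> (b \<noteq> nu)) (br v (br u w)) = br (br u v) w"
proof -
  fix a b c u v w
  assume u: "u \<in> W a" and v: "v \<in> W b" and w: "w \<in> W c"
  have vw: "br v w \<in> W ((b \<noteq> c) \<noteq> nu)" using br_degree v w .
  have uw: "br u w \<in> W ((a \<noteq> c) \<noteq> nu)" using br_degree u w .
  note S1 = br_skew[OF u vw]
  note S2 = br_skew[OF v uw]
  note J1 = jac[OF v w u]
  note J2 = jac[OF u w v]
  note J3 = jac[OF u v w]
  note A1 = alpha_sym[OF v w u]
  note A2 = alpha_sym[OF u w v]
  note A3 = alpha_sym[OF w v u]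
  show "br u (br v w) - psign ((a \<noteq> nu) \<and> (b \<noteq> nu)) (br v (br u w)) = br (br u v) w"
    unfolding S1 S2 J1 J2 J3 A1 A2 A3
    by (cases a; cases b; cases c; cases nu) (simp_all add: psign_def algebra_simps)
qed

end
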